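(* For every $n\geq 2$: (a) $E_Y(\overline\Phi^{(2)}_n)=5n(n-1)-8n(H_n-1)$; (b) $E_U(\overline\Phi^{(2)}_n)=\frac{1}{6}n(4n^2+21n-7)-\frac{3}{4}n(n+3)\frac{(2n-2)!!}{(2n-3)!!}$.
   Context: A phylogenetic tree with $n$ leaves is a fully resolved (binary) rooted tree with leaves bijectively labeled by $\{1,\dots,n\}$; $\mathcal{T}_n$ is the set of such trees. For leaves $i\ne j$, $\varphi_T(i,j)$ is the depth (number of arcs from the root) of their lowest common ancestor; $\varphi_T(i,i)$ is the depth of leaf $i$. $\overline\Phi^{(2)}_n$ is the random variable on $\mathcal{T}_n$ giving $\overline\Phi^{(2)}(T)=\sum_{1\le i\le j\le n}\varphi_T(i,j)^2$. $E_Y$ is expectation under the Yule model, $P_Y(T)=\frac{2^{n-1}}{n!}\prod_v\frac{1}{\ell_T(v)-1}$ (product over internal nodes $v$, $\ell_T(v)$ the number of descendant leaves of $v$); $E_U$ is expectation under the uniform distribution $P_U(T)=1/(2n-3)!!$. $H_n=\sum_{i=1}^n1/i$. Double factorials: $(2m-1)!!=(2m-1)(2m-3)\cdots1$, $(2m)!!=(2m)(2m-2)\cdots2$, $0!!=1$. *)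

theory Defs
  imports "HOL-Analysis.Harmonic_Numbers"
begin

text \<open>A phylogenetic tree
 (unordered) is represented canonically: at each internal node the child whose
 leaf set has the smaller minimal label is the left child.\<close>

datatype ptree = Leaf nat | Node ptree ptree

fun leaves :: "ptree \<Rightarrow> nat set" where
  "leaves (Leaf i) = {i}"
| "leaves (Node l r) = leaves l \<union> leaves r"

fun canonical :: "ptree \<Rightarrow> bool" where
  "canonical (Leaf i) = True"
| "canonical (Node l r) = (canonical l \<and> canonical r \<and> leaves l \<inter> leaves r = {}
      \<and> Min (leaves l) < Min (leaves r))"

definition phylo_trees :: "nat \<Rightarrow> ptree set" where
  "phylo_trees n = {t. canonical t \<and> leaves t = {1..n}}"

fun lca_depth :: "ptree \<Rightarrow> nat \<Rightarrow> nat \<Rightarrow> nat" where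
  "lca_depth (Leaf k) i j = 0"
| "lca_depth (Node l r) i j =
     (if i \<in> leaves l \<and> j \<in> leaves l then 1 + lca_depth l i j
      else if i \<in> leaves r \<and> j \<in> leaves r then 1 + lca_depth r i j
      else 0)"

definition Phi2 :: "nat \<Rightarrow> ptree \<Rightarrow> nat" where
  "Phi2 n t = (\<Sum>(i,j)\<in>{(i,j). 1 \<le> i \<and> i \<le> j \<and> j \<le> n}. (lca_depth t i j)^2)"

fun yule_prod :: "ptree \<Rightarrow> real" where
  "yule_prod (Leaf i) = 1"
| "yule_prod (Node l r) =
     yule_prod l * yule_prod r / (real (card (leaves (Node l r))) - 1)"

definition P_Y :: "nat \<Rightarrow> ptree \<Rightarrow> real" where
  "P_Y n t = 2^(n-1) / fact n * yule_prod t"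

fun dfact :: "nat \<Rightarrow> nat" where
  "dfact 0 = 1"
| "dfact (Suc 0) = 1"
| "dfact (Suc (Suc m)) = (Suc (Suc m)) * dfact m"

definition P_U :: "nat \<Rightarrow> ptree \<Rightarrow> real" where
  "P_U n t = 1 / real (dfact (2*n-3))"

definition E_Y_Phi2 :: "nat \<Rightarrow> real" where
  "E_Y_Phi2 n = (\<Sum>t\<in>phylo_trees n. P_Y n t * real (Phi2 n t))"

definition E_U_Phi2 :: "nat \<Rightarrow> real" where
  "E_U_Phi2 n = (\<Sum>t\<in>phylo_trees n. P_U n t * real (Phi2 n t))"

end

theory Submission
  imports Defs "HOL-Computational_Algebra.Formal_Power_Series"
begin


definition trees :: "nat set \<Rightarrow> ptree set" where
  "trees S = {t. canonical t \<and> leaves t = S}"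

lemma leaves_finite[simp]: "finite (leaves t)"
  by (induction t) auto

lemma leaves_ne[simp]: "leaves t \<noteq> {}"
  by (induction t) auto

definition splits :: "nat set \<Rightarrow> nat set set" where
  "splits S = {A. A \<subseteq> S \<and> Min S \<in> A \<and> A \<noteq> S}"

lemma trees_empty: "trees {} = {}"
  by (auto simp: trees_def)

lemma trees_single: "trees {a} = {Leaf a}"
proof -
  have "t = Leaf a" if "canonical t" "leaves t = {a}" for t
  proof (cases t)
    case (Node l r)
    then have "leaves l \<inter> leaves r = {}" using that by auto
    moreover have "leaves l \<subseteq> {a}" "leaves r \<subseteq> {a}" using that Node by auto
    ultimately show ?thesis using leaves_ne[of l] leaves_ne[of r] by blast
  qed (use that in auto)
  then show ?thesis by (auto simp: trees_def)
qed

lemma card_leaves_Node: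
  assumes "canonical (Node l r)"
  shows "card (leaves (Node l r)) = card (leaves l) + card (leaves r)"
  using assms by (simp add: card_Un_disjoint)

lemma trees_decomp:
  assumes "finite S" "card S \<ge> 2"
  shows "trees S = (\<lambda>(A,l,r). Node l r) ` (SIGMA A:splits S. trees A \<times> trees (S - A))"
proof (intro equalityI subsetI)
  fix t assume t: "t \<in> trees S"
  show "t \<in> (\<lambda>(A,l,r). Node l r) ` (SIGMA A:splits S. trees A \<times> trees (S - A))"
  proof (cases t)
    case (Leaf i)
    then have "S = {i}" using t by (auto simp: trees_def)
    then show ?thesis using assms by simp
  next
    case (Node l r)
    have c: "canonical l" "canonical r" "leaves l \<inter> leaves r = {}"
      "Min (leaves l) < Min (leaves r)" and S: "S = leaves l \<union> leaves r"
      using t Node by (auto simp: trees_def)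
    have "Min S = min (Min (leaves l)) (Min (leaves r))"
      unfolding S by (rule Min_Un) auto
    then have m: "Min S = Min (leaves l)" using c by simp
    have "Min (leaves l) \<in> leaves l" by (rule Min_in) auto
    moreover have "leaves l \<noteq> S"
    proof
      assume "leaves l = S"
      then have "leaves r \<subseteq> leaves l" using S by auto
      then show False using c(3) leaves_ne[of r] by blast
    qed
    ultimately have "leaves l \<in> splits S"
      unfolding splits_def using m S by auto
    moreover have "S - leaves l = leaves r" using S c by auto
    ultimately show ?thesis using Node c
      by (auto simp: trees_def image_iff intro!: bexI[of _ "(leaves l, l, r)"])
  qed
next
  fix t assume "t \<in> (\<lambda>(A,l,r). Node l r) ` (SIGMA A:splits S. trees A \<times> trees (S - A))"
  then obtain A l r where t: "t = Node l r" and A: "A \<in> splits S" and l: "l \<in> trees A"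
    and r: "r \<in> trees (S - A)" by auto
  have fin: "finite A" "finite (S - A)" using A assms(1) by (auto simp: splits_def intro: finite_subset)
  have ne: "S - A \<noteq> {}" using A by (auto simp: splits_def)
  have "Min S \<in> A" "A \<subseteq> S" using A by (auto simp: splits_def)
  have "Min A = Min S"
    using \<open>Min S \<in> A\<close> \<open>A \<subseteq> S\<close> fin assms(1)
    by (metis Min_antimono Min_le empty_iff le_antisym)
  moreover have "Min S < Min (S - A)"
  proof -
    have "Min (S - A) \<in> S - A" using fin ne by (intro Min_in) auto
    then have "Min S \<le> Min (S - A)" "Min (S - A) \<noteq> Min S" using assms(1) \<open>Min S \<in> A\<close> by auto
    then show ?thesis by simp
  qed
  ultimately show "t \<in> trees S" using l r t \<open>A \<subseteq> S\<close> by (auto simp: trees_def)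
qed

lemma trees_decomp_inj:
  "inj_on (\<lambda>(A,l,r). Node l r) (SIGMA A:splits S. trees A \<times> trees (S - A))"
  by (auto simp: inj_on_def trees_def)

lemma finite_trees: "finite S \<Longrightarrow> finite (trees S)"
proof (induction "card S" arbitrary: S rule: less_induct)
  case less
  show ?case
  proof (cases "card S \<ge> 2")
    case True
    have "finite (SIGMA A:splits S. trees A \<times> trees (S - A))"
    proof (rule finite_SigmaI)
      show "finite (splits S)" using less.prems by (auto simp: splits_def)
    next
      fix A assume A: "A \<in> splits S"
      have "A \<subseteq> S" "A \<noteq> S" "Min S \<in> A" using A by (auto simp: splits_def)
      then have "card A < card S" "card (S - A) < card S" "finite A" "finite (S - A)"
        using less.prems by (auto intro: psubset_card_mono finite_subset card_Diff1_less)
      then show "finite (trees A \<times> trees (S - A))"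
        using less.hyps by auto
    qed
    then show ?thesis using trees_decomp[OF less.prems True] by simp
  next
    case False
    then have "card S = 0 \<or> card S = 1" by auto
    then show ?thesis using less.prems
      by (auto simp: card_1_singleton_iff trees_empty trees_single)
  qed
qed



definition pairs :: "nat set \<Rightarrow> (nat \<times> nat) set" where
  "pairs S = {(i,j). i \<in> S \<and> j \<in> S \<and> i \<le> j}"

definition Tn :: "nat \<Rightarrow> real" where "Tn k = real k * (real k + 1) / 2"

definition phs :: "nat \<Rightarrow> ptree \<Rightarrow> real" where
  "phs p t = (\<Sum>(i,j)\<in>pairs (leaves t). real (lca_depth t i j) ^ p)"

lemma finite_pairs[simp]: "finite S \<Longrightarrow> finite (pairs S)"
proof -
  assume "finite S"
  then have "finite (S \<times> S)" by simp
  moreover have "pairs S \<subseteq> S \<times> S" by (auto simp: pairs_def)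
  ultimately show ?thesis by (rule finite_subset[rotated])
qed

lemma card_pairs: assumes "finite S" shows "real (card (pairs S)) = Tn (card S)"
proof -
  let ?P = "pairs S" and ?Q = "prod.swap ` pairs S"
  have "?P \<union> ?Q = S \<times> S" by (auto simp: pairs_def image_iff)
  moreover have "?P \<inter> ?Q = (\<lambda>x. (x,x)) ` S" by (auto simp: pairs_def image_iff)
  moreover have "card ?Q = card ?P" by (rule card_image) (auto simp: inj_on_def)
  moreover have "card ((\<lambda>x. (x,x)) ` S) = card S" by (rule card_image) (simp add: inj_on_def)
  moreover have "card ?P + card ?Q = card (?P \<union> ?Q) + card (?P \<inter> ?Q)"
    by (rule card_Un_Int) (use assms in auto)
  ultimately have "2 * card ?P = card S * card S + card S" by (simp add: card_cartesian_product)
  then have "2 * real (card ?P) = real (card S) * real (card S) + real (card S)"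
    by (metis of_nat_add of_nat_mult of_nat_numeral)
  then show ?thesis unfolding Tn_def by (simp add: field_simps)
qed

lemma phs_Node:
  assumes c: "canonical (Node l r)" and p: "p > 0"
  shows "phs p (Node l r) =
    (\<Sum>(i,j)\<in>pairs (leaves l). (1 + real (lca_depth l i j)) ^ p) +
    (\<Sum>(i,j)\<in>pairs (leaves r). (1 + real (lca_depth r i j)) ^ p)"
proof -
  let ?L = "leaves l" and ?R = "leaves r"
  have d: "?L \<inter> ?R = {}" using c by simp
  define f where "f = (\<lambda>(i,j). real (lca_depth (Node l r) i j) ^ p)"
  have f: "f x = (if x \<in> pairs ?L then (case x of (i,j) \<Rightarrow> (1 + real (lca_depth l i j)) ^ p) else 0)
     + (if x \<in> pairs ?R then (case x of (i,j) \<Rightarrow> (1 + real (lca_depth r i j)) ^ p) else 0)"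
    if "x \<in> pairs (?L \<union> ?R)" for x
    using that d p by (auto simp: f_def pairs_def add.commute split: prod.splits)
  have "phs p (Node l r) = (\<Sum>x\<in>pairs (?L \<union> ?R). f x)"
    by (simp add: phs_def f_def)
  also have "\<dots> = (\<Sum>x\<in>pairs (?L \<union> ?R). (if x \<in> pairs ?L then (case x of (i,j) \<Rightarrow> (1 + real (lca_depth l i j)) ^ p) else 0)
     + (if x \<in> pairs ?R then (case x of (i,j) \<Rightarrow> (1 + real (lca_depth r i j)) ^ p) else 0))"
    by (rule sum.cong[OF refl f])
  also have "\<dots> = (\<Sum>x\<in>pairs (?L \<union> ?R) \<inter> pairs ?L. (case x of (i,j) \<Rightarrow> (1 + real (lca_depth l i j)) ^ p))
     + (\<Sum>x\<in>pairs (?L \<union> ?R) \<inter> pairs ?R. (case x of (i,j) \<Rightarrow> (1 + real (lca_depth r i j)) ^ p))"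
    by (simp add: sum.distrib sum.inter_restrict)
  also have "pairs (?L \<union> ?R) \<inter> pairs ?L = pairs ?L" by (auto simp: pairs_def)
  also have "pairs (?L \<union> ?R) \<inter> pairs ?R = pairs ?R" by (auto simp: pairs_def)
  finally show ?thesis .
qed

lemma ph1_Node:
  assumes c: "canonical (Node l r)"
  shows "phs 1 (Node l r) = phs 1 l + phs 1 r + Tn (card (leaves l)) + Tn (card (leaves r))"
proof -
  have "(\<Sum>(i,j)\<in>pairs (leaves t). (1 + real (lca_depth t i j)) ^ 1) = phs 1 t + Tn (card (leaves t))" for t
    by (simp add: phs_def sum.distrib card_pairs[symmetric] case_prod_beta add.commute)
  then show ?thesis using phs_Node[OF c, of 1] by simp
qed

lemma ph2_Node:
  assumes c: "canonical (Node l r)"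
  shows "phs 2 (Node l r) = phs 2 l + phs 2 r + 2 * phs 1 l + 2 * phs 1 r
     + Tn (card (leaves l)) + Tn (card (leaves r))"
proof -
  have "(\<Sum>(i,j)\<in>pairs (leaves t). (1 + real (lca_depth t i j)) ^ 2) = phs 2 t + 2 * phs 1 t + Tn (card (leaves t))" for t
  proof -
    have "(\<Sum>(i,j)\<in>pairs (leaves t). (1 + real (lca_depth t i j)) ^ 2) =
       (\<Sum>x\<in>pairs (leaves t). real (lca_depth t (fst x) (snd x)) ^ 2 + 2 * real (lca_depth t (fst x) (snd x)) + 1)"
      by (rule sum.cong) (auto simp: power2_eq_square algebra_simps)
    then show ?thesis
      by (simp add: phs_def sum.distrib card_pairs[symmetric] case_prod_beta sum_distrib_left)
  qed
  then show ?thesis using phs_Node[OF c, of 2] by simp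
qed

lemma phs_Leaf: "p > 0 \<Longrightarrow> phs p (Leaf a) = 0"
  by (simp add: phs_def)



lemma splits_sub: "A \<in> splits S \<Longrightarrow> finite S \<Longrightarrow> finite A \<and> finite (S - A) \<and> A \<noteq> {} \<and> S - A \<noteq> {}
   \<and> card A < card S \<and> card (S - A) < card S \<and> card (S - A) = card S - card A \<and> card A \<ge> 1"
proof -
  assume A: "A \<in> splits S" and f: "finite S"
  have s: "A \<subseteq> S" "A \<noteq> S" "Min S \<in> A" using A by (auto simp: splits_def)
  then have fa: "finite A" using f by (auto intro: finite_subset)
  have c0: "card A > 0" using fa s by (auto simp: card_gt_0_iff)
  have c1: "card A < card S" using s f by (auto intro: psubset_card_mono)
  have c2: "card (S - A) = card S - card A" using s fa by (simp add: card_Diff_subset)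
  show ?thesis using s f fa c0 c1 c2 by auto
qed

lemma sum_trees_decomp:
  assumes "finite S" "card S \<ge> 2"
  shows "(\<Sum>t\<in>trees S. f t) = (\<Sum>A\<in>splits S. \<Sum>l\<in>trees A. \<Sum>r\<in>trees (S - A). f (Node l r))"
proof -
  have fs: "finite (splits S)" using assms(1) by (auto simp: splits_def)
  have ft: "finite (trees A \<times> trees (S - A))" if "A \<in> splits S" for A
    using splits_sub[OF that assms(1)] by (simp add: finite_trees)
  have "(\<Sum>t\<in>trees S. f t) = (\<Sum>x\<in>(SIGMA A:splits S. trees A \<times> trees (S - A)). f ((\<lambda>(A,l,r). Node l r) x))"
    unfolding trees_decomp[OF assms] by (rule sum.reindex[OF trees_decomp_inj, unfolded comp_def])
  also have "\<dots> = (\<Sum>A\<in>splits S. \<Sum>x\<in>trees A \<times> trees (S - A). f ((\<lambda>(A,l,r). Node l r) (A,x)))"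
    by (subst sum.Sigma[OF fs]) (use ft in \<open>auto simp: split_def\<close>)
  also have "\<dots> = (\<Sum>A\<in>splits S. \<Sum>l\<in>trees A. \<Sum>r\<in>trees (S - A). f (Node l r))"
    by (rule sum.cong[OF refl]) (simp add: sum.cartesian_product case_prod_beta)
  finally show ?thesis .
qed

lemma sum_Pow_card:
  assumes "finite S"
  shows "(\<Sum>B\<in>Pow S. H (card B)) = (\<Sum>j=0..card S. real (card S choose j) * (H j :: real))"
proof -
  have "(\<Sum>B\<in>Pow S. H (card B)) = (\<Sum>j\<in>{0..card S}. \<Sum>B\<in>{B \<in> Pow S. card B = j}. H (card B))"
    by (rule sum.group[symmetric]) (use assms in \<open>auto intro: card_mono\<close>)
  also have "\<dots> = (\<Sum>j=0..card S. real (card S choose j) * H j)"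
  proof (rule sum.cong[OF refl])
    fix j
    have "{B \<in> Pow S. card B = j} = {B. B \<subseteq> S \<and> card B = j}" by auto
    then show "(\<Sum>B\<in>{B \<in> Pow S. card B = j}. H (card B)) = real (card S choose j) * H j"
      using n_subsets[OF assms, of j] by simp
  qed
  finally show ?thesis .
qed

lemma sum_splits_card:
  assumes "finite S" "card S \<ge> 2"
  shows "(\<Sum>A\<in>splits S. G (card A)) = (\<Sum>k=1..card S - 1. real (card S - 1 choose (k - 1)) * (G k :: real))"
proof -
  define m where "m = Min S"
  define S' where "S' = S - {m}"
  have mS: "m \<in> S" unfolding m_def using assms by (intro Min_in) auto
  have cS': "card S' = card S - 1" "finite S'" unfolding S'_def using mS assms by auto
  have sp: "splits S = insert m ` (Pow S' - {S'})"
  proof (intro equalityI subsetI)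
    fix A assume "A \<in> splits S"
    then have "A \<subseteq> S" "m \<in> A" "A \<noteq> S" by (auto simp: splits_def m_def)
    then have "A = insert m (A - {m})" "A - {m} \<in> Pow S' - {S'}"
      unfolding S'_def using mS by auto
    then show "A \<in> insert m ` (Pow S' - {S'})" by blast
  next
    fix A assume "A \<in> insert m ` (Pow S' - {S'})"
    then obtain B where "A = insert m B" "B \<subseteq> S'" "B \<noteq> S'" by auto
    then show "A \<in> splits S" unfolding splits_def S'_def m_def[symmetric] using mS by auto
  qed
  have inj: "inj_on (insert m) (Pow S' - {S'})"
    unfolding S'_def by (auto simp: inj_on_def)
  have "(\<Sum>A\<in>splits S. G (card A)) = (\<Sum>B\<in>Pow S' - {S'}. G (card (insert m B)))"
    unfolding sp by (subst sum.reindex[OF inj]) simp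
  also have "\<dots> = (\<Sum>B\<in>Pow S' - {S'}. G (Suc (card B)))"
    by (rule sum.cong[OF refl]) (use cS' in \<open>auto simp: S'_def intro!: arg_cong[where f=G] card_insert_disjoint dest: finite_subset\<close>)
  also have "\<dots> = (\<Sum>B\<in>Pow S'. G (Suc (card B))) - G (Suc (card S'))"
    by (subst sum_diff1) (use cS' in auto)
  also have "(\<Sum>B\<in>Pow S'. G (Suc (card B))) = (\<Sum>j=0..card S'. real (card S' choose j) * G (Suc j))"
    by (rule sum_Pow_card[OF cS'(2)])
  also have "\<dots> = (\<Sum>j=0..<card S'. real (card S' choose j) * G (Suc j)) + G (Suc (card S'))"
    by (simp add: atLeastLessThanSuc_atLeastAtMost[symmetric])
  also have "(\<Sum>j=0..<card S'. real (card S' choose j) * G (Suc j)) =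
      (\<Sum>k=1..card S - 1. real (card S - 1 choose (k - 1)) * G k)"
  proof -
    have "(\<Sum>k=1..card S - 1. real (card S - 1 choose (k - 1)) * G k) =
          (\<Sum>k=Suc 0..<Suc (card S'). real (card S' choose (k - 1)) * G k)"
      using cS' assms by (intro sum.cong) auto
    also have "\<dots> = (\<Sum>j=0..<card S'. real (card S' choose j) * G (Suc j))"
      by (subst sum.shift_bounds_Suc_ivl) simp
    finally show ?thesis by simp
  qed
  finally show ?thesis by simp
qed

lemma sum_prod_expand:
  fixes w p q :: "'a \<Rightarrow> real" and w' p' q' :: "'b \<Rightarrow> real"
  assumes "finite L" "finite R"
  shows "(\<Sum>l\<in>L. \<Sum>r\<in>R. c * (w l * w' r) * (p l + p' r + k))
    = c * ((\<Sum>l\<in>L. w l * p l) * (\<Sum>r\<in>R. w' r) + (\<Sum>l\<in>L. w l) * (\<Sum>r\<in>R. w' r * p' r)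
       + k * ((\<Sum>l\<in>L. w l) * (\<Sum>r\<in>R. w' r)))"
proof -
  have "(\<Sum>l\<in>L. \<Sum>r\<in>R. c * (w l * w' r) * (p l + p' r + k)) =
    (\<Sum>l\<in>L. \<Sum>r\<in>R. (c * (w l * p l)) * w' r + (c * w l) * (w' r * p' r) + (c * k * w l) * w' r)"
    by (intro sum.cong refl) (simp add: algebra_simps)
  also have "\<dots> = (\<Sum>l\<in>L. c * (w l * p l)) * (\<Sum>r\<in>R. w' r) + (\<Sum>l\<in>L. c * w l) * (\<Sum>r\<in>R. w' r * p' r)
       + (\<Sum>l\<in>L. c * k * w l) * (\<Sum>r\<in>R. w' r)"
    by (simp only: sum.distrib sum_product)
  also have "\<dots> = c * (\<Sum>l\<in>L. w l * p l) * (\<Sum>r\<in>R. w' r) + c * (\<Sum>l\<in>L. w l) * (\<Sum>r\<in>R. w' r * p' r)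
       + c * k * (\<Sum>l\<in>L. w l) * (\<Sum>r\<in>R. w' r)"
    by (simp only: sum_distrib_left[symmetric])
  finally show ?thesis by (simp add: algebra_simps)
qed



lemma node_in:
  assumes "finite S" "card S \<ge> 2" "A \<in> splits S" "l \<in> trees A" "r \<in> trees (S - A)"
  shows "canonical (Node l r)" "leaves l = A" "leaves r = S - A"
proof -
  have "Node l r \<in> trees S" unfolding trees_decomp[OF assms(1,2)] using assms(3-5)
    by (auto simp: image_iff intro!: bexI[of _ "(A,l,r)"])
  then show "canonical (Node l r)" by (simp add: trees_def)
  show "leaves l = A" "leaves r = S - A" using assms(4,5) by (auto simp: trees_def)
qed

lemma tree_sums:
  fixes w :: "ptree \<Rightarrow> real" and c :: "nat \<Rightarrow> real" and z f1 f2 :: "nat \<Rightarrow> real"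
  assumes wL: "\<And>a. w (Leaf a) = 1"
  and wN: "\<And>l r. canonical (Node l r) \<Longrightarrow> w (Node l r) = c (card (leaves l) + card (leaves r)) * (w l * w r)"
  and z1: "z 1 = 1" and f11: "f1 1 = 0" and f21: "f2 1 = 0"
  and zr: "\<And>n. n \<ge> 2 \<Longrightarrow> z n = c n * (\<Sum>k=1..n-1. real (n-1 choose (k-1)) * (z k * z (n-k)))"
  and f1r: "\<And>n. n \<ge> 2 \<Longrightarrow> f1 n = c n * (\<Sum>k=1..n-1. real (n-1 choose (k-1)) *
      (f1 k * z (n-k) + z k * f1 (n-k) + (Tn k + Tn (n-k)) * (z k * z (n-k))))"
  and f2r: "\<And>n. n \<ge> 2 \<Longrightarrow> f2 n = c n * (\<Sum>k=1..n-1. real (n-1 choose (k-1)) *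
      ((f2 k + 2 * f1 k) * z (n-k) + z k * (f2 (n-k) + 2 * f1 (n-k)) + (Tn k + Tn (n-k)) * (z k * z (n-k))))"
  shows "finite S \<Longrightarrow> S \<noteq> {} \<Longrightarrow> (\<Sum>t\<in>trees S. w t) = z (card S) \<and>
     (\<Sum>t\<in>trees S. w t * phs 1 t) = f1 (card S) \<and> (\<Sum>t\<in>trees S. w t * phs 2 t) = f2 (card S)"
proof (induction "card S" arbitrary: S rule: less_induct)
  case less
  show ?case
  proof (cases "card S \<ge> 2")
    case False
    moreover have "card S > 0" using less.prems by (simp add: card_gt_0_iff)
    ultimately have "card S = 1" by linarith
    then obtain a where "S = {a}" by (auto simp: card_1_singleton_iff)
    then show ?thesis using z1 f11 f21 by (simp add: trees_single wL phs_Leaf)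
  next
    case True
    define n where "n = card S"
    have n2: "n \<ge> 2" using True n_def by simp
    note fin = less.prems(1)
    have IH: "(\<Sum>t\<in>trees A. w t) = z (card A) \<and>
       (\<Sum>t\<in>trees A. w t * phs 1 t) = f1 (card A) \<and> (\<Sum>t\<in>trees A. w t * phs 2 t) = f2 (card A)
      \<and> (\<Sum>t\<in>trees (S - A). w t) = z (n - card A) \<and>
       (\<Sum>t\<in>trees (S - A). w t * phs 1 t) = f1 (n - card A) \<and> (\<Sum>t\<in>trees (S - A). w t * phs 2 t) = f2 (n - card A)"
      if A: "A \<in> splits S" for A
    proof -
      note ss = splits_sub[OF A fin]
      show ?thesis using less.hyps[of A] less.hyps[of "S - A"] ss n_def by auto
    qed
    have ws: "w (Node l r) = c n * (w l * w r)"
      and p1: "phs 1 (Node l r) = phs 1 l + phs 1 r + (Tn (card A) + Tn (n - card A))"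
      and p2: "phs 2 (Node l r) = (phs 2 l + 2 * phs 1 l) + (phs 2 r + 2 * phs 1 r) + (Tn (card A) + Tn (n - card A))"
      if "A \<in> splits S" "l \<in> trees A" "r \<in> trees (S - A)" for A l r
    proof -
      note ni = node_in[OF fin True that]
      note ss = splits_sub[OF that(1) fin]
      have "card (leaves l) + card (leaves r) = n" using ni ss n_def by simp
      then show "w (Node l r) = c n * (w l * w r)" using wN[OF ni(1)] by simp
      show "phs 1 (Node l r) = phs 1 l + phs 1 r + (Tn (card A) + Tn (n - card A))"
        using ph1_Node[OF ni(1)] ni ss n_def by simp
      show "phs 2 (Node l r) = (phs 2 l + 2 * phs 1 l) + (phs 2 r + 2 * phs 1 r) + (Tn (card A) + Tn (n - card A))"
        using ph2_Node[OF ni(1)] ni ss n_def by simp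
    qed
    have ft: "finite (trees A)" "finite (trees (S - A))" if "A \<in> splits S" for A
      using splits_sub[OF that fin] finite_trees by auto
    have sk: "(\<Sum>k=1..n-1. real (n-1 choose (k-1)) * G k) = (\<Sum>A\<in>splits S. G (card A))" for G
      using sum_splits_card[OF fin True] n_def by simp
    have e0: "(\<Sum>t\<in>trees S. w t) = z n"
    proof -
      have "(\<Sum>t\<in>trees S. w t) = (\<Sum>A\<in>splits S. \<Sum>l\<in>trees A. \<Sum>r\<in>trees (S - A). w (Node l r))"
        by (rule sum_trees_decomp[OF fin True])
      also have "\<dots> = (\<Sum>A\<in>splits S. c n * (z (card A) * z (n - card A)))"
      proof (rule sum.cong[OF refl])
        fix A assume A: "A \<in> splits S"
        have "(\<Sum>l\<in>trees A. \<Sum>r\<in>trees (S - A). w (Node l r)) = (\<Sum>l\<in>trees A. \<Sum>r\<in>trees (S - A). c n * (w l * w r))"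
          using ws[OF A] by (intro sum.cong refl) auto
        also have "\<dots> = c n * ((\<Sum>l\<in>trees A. w l) * (\<Sum>r\<in>trees (S - A). w r))"
          by (subst sum_product) (simp add: sum_distrib_left)
        finally show "(\<Sum>l\<in>trees A. \<Sum>r\<in>trees (S - A). w (Node l r)) = c n * (z (card A) * z (n - card A))"
          using IH[OF A] by simp
      qed
      also have "\<dots> = (\<Sum>k=1..n-1. real (n-1 choose (k-1)) * (c n * (z k * z (n - k))))"
        by (rule sk[symmetric])
      also have "\<dots> = z n" by (simp add: zr[OF n2] sum_distrib_left algebra_simps)
      finally show ?thesis .
    qed
    have e1: "(\<Sum>t\<in>trees S. w t * phs 1 t) = f1 n"
    proof -
      have "(\<Sum>t\<in>trees S. w t * phs 1 t) = (\<Sum>A\<in>splits S. \<Sum>l\<in>trees A. \<Sum>r\<in>trees (S - A). w (Node l r) * phs 1 (Node l r))"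
        by (rule sum_trees_decomp[OF fin True])
      also have "\<dots> = (\<Sum>A\<in>splits S. c n * (f1 (card A) * z (n - card A) + z (card A) * f1 (n - card A)
           + (Tn (card A) + Tn (n - card A)) * (z (card A) * z (n - card A))))"
      proof (rule sum.cong[OF refl])
        fix A assume A: "A \<in> splits S"
        have "(\<Sum>l\<in>trees A. \<Sum>r\<in>trees (S - A). w (Node l r) * phs 1 (Node l r)) =
          (\<Sum>l\<in>trees A. \<Sum>r\<in>trees (S - A). c n * (w l * w r) * (phs 1 l + phs 1 r + (Tn (card A) + Tn (n - card A))))"
          using ws[OF A] p1[OF A] by (intro sum.cong refl) auto
        also have "\<dots> = c n * ((\<Sum>l\<in>trees A. w l * phs 1 l) * (\<Sum>r\<in>trees (S - A). w r) +
            (\<Sum>l\<in>trees A. w l) * (\<Sum>r\<in>trees (S - A). w r * phs 1 r) +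
            (Tn (card A) + Tn (n - card A)) * ((\<Sum>l\<in>trees A. w l) * (\<Sum>r\<in>trees (S - A). w r)))"
          by (rule sum_prod_expand) (use ft[OF A] in auto)
        finally show "(\<Sum>l\<in>trees A. \<Sum>r\<in>trees (S - A). w (Node l r) * phs 1 (Node l r)) =
           c n * (f1 (card A) * z (n - card A) + z (card A) * f1 (n - card A)
           + (Tn (card A) + Tn (n - card A)) * (z (card A) * z (n - card A)))"
          using IH[OF A] by simp
      qed
      also have "\<dots> = (\<Sum>k=1..n-1. real (n-1 choose (k-1)) * (c n * (f1 k * z (n - k) + z k * f1 (n - k)
           + (Tn k + Tn (n - k)) * (z k * z (n - k)))))"
        by (rule sk[symmetric])
      also have "\<dots> = f1 n" by (simp add: f1r[OF n2] sum_distrib_left algebra_simps)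
      finally show ?thesis .
    qed
    have e2: "(\<Sum>t\<in>trees S. w t * phs 2 t) = f2 n"
    proof -
      have "(\<Sum>t\<in>trees S. w t * phs 2 t) = (\<Sum>A\<in>splits S. \<Sum>l\<in>trees A. \<Sum>r\<in>trees (S - A). w (Node l r) * phs 2 (Node l r))"
        by (rule sum_trees_decomp[OF fin True])
      also have "\<dots> = (\<Sum>A\<in>splits S. c n * ((f2 (card A) + 2 * f1 (card A)) * z (n - card A) + z (card A) * (f2 (n - card A) + 2 * f1 (n - card A))
           + (Tn (card A) + Tn (n - card A)) * (z (card A) * z (n - card A))))"
      proof (rule sum.cong[OF refl])
        fix A assume A: "A \<in> splits S"
        have "(\<Sum>l\<in>trees A. \<Sum>r\<in>trees (S - A). w (Node l r) * phs 2 (Node l r)) =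
          (\<Sum>l\<in>trees A. \<Sum>r\<in>trees (S - A). c n * (w l * w r) * ((phs 2 l + 2 * phs 1 l) + (phs 2 r + 2 * phs 1 r) + (Tn (card A) + Tn (n - card A))))"
          using ws[OF A] p2[OF A] by (intro sum.cong refl) auto
        also have "\<dots> = c n * ((\<Sum>l\<in>trees A. w l * (phs 2 l + 2 * phs 1 l)) * (\<Sum>r\<in>trees (S - A). w r) +
            (\<Sum>l\<in>trees A. w l) * (\<Sum>r\<in>trees (S - A). w r * (phs 2 r + 2 * phs 1 r)) +
            (Tn (card A) + Tn (n - card A)) * ((\<Sum>l\<in>trees A. w l) * (\<Sum>r\<in>trees (S - A). w r)))"
          by (rule sum_prod_expand) (use ft[OF A] in auto)
        also have "(\<Sum>l\<in>trees A. w l * (phs 2 l + 2 * phs 1 l)) = (\<Sum>l\<in>trees A. w l * phs 2 l) + 2 * (\<Sum>l\<in>trees A. w l * phs 1 l)"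
          by (simp add: algebra_simps sum.distrib sum_distrib_left)
        also have "(\<Sum>l\<in>trees (S - A). w l * (phs 2 l + 2 * phs 1 l)) = (\<Sum>l\<in>trees (S - A). w l * phs 2 l) + 2 * (\<Sum>l\<in>trees (S - A). w l * phs 1 l)"
          by (simp add: algebra_simps sum.distrib sum_distrib_left)
        finally show "(\<Sum>l\<in>trees A. \<Sum>r\<in>trees (S - A). w (Node l r) * phs 2 (Node l r)) =
           c n * ((f2 (card A) + 2 * f1 (card A)) * z (n - card A) + z (card A) * (f2 (n - card A) + 2 * f1 (n - card A))
           + (Tn (card A) + Tn (n - card A)) * (z (card A) * z (n - card A)))"
          using IH[OF A] by simp
      qed
      also have "\<dots> = (\<Sum>k=1..n-1. real (n-1 choose (k-1)) * (c n * ((f2 k + 2 * f1 k) * z (n - k) + z k * (f2 (n - k) + 2 * f1 (n - k))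
           + (Tn k + Tn (n - k)) * (z k * z (n - k)))))"
        by (rule sk[symmetric])
      also have "\<dots> = f2 n" by (simp add: f2r[OF n2] sum_distrib_left algebra_simps)
      finally show ?thesis .
    qed
    show ?thesis using e0 e1 e2 n_def by simp
  qed
qed



lemma sum_sym:
  fixes u :: "nat \<Rightarrow> real"
  shows "(\<Sum>k=1..n-1. real k * (u k + u (n - k))) = real n * (\<Sum>k=1..n-1. u k)"
proof -
  have "(\<Sum>k=1..n-1. real k * u (n - k)) = (\<Sum>k=1..n-1. real (n - 1 + 1 - k) * u (n - (n - 1 + 1 - k)))"
    by (rule sum.atLeastAtMost_rev)
  also have "\<dots> = (\<Sum>k=1..n-1. real (n - k) * u k)"
    by (intro sum.cong refl) auto
  finally have "(\<Sum>k=1..n-1. real k * (u k + u (n - k))) = (\<Sum>k=1..n-1. (real k + real (n - k)) * u k)"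
    by (simp add: algebra_simps sum.distrib)
  also have "\<dots> = (\<Sum>k=1..n-1. real n * u k)"
    by (intro sum.cong refl) auto
  finally show ?thesis by (simp add: sum_distrib_left)
qed

definition zY :: "nat \<Rightarrow> real" where "zY n = fact n / 2 ^ (n - 1)"
definition e1Y :: "nat \<Rightarrow> real" where "e1Y n = real n * (real n - 1)"
definition e2Y :: "nat \<Rightarrow> real" where "e2Y n = real n * (5 * (real n - 1) - 8 * (harm n - 1))"

lemma Ck_Y:
  assumes "1 \<le> k" "k \<le> n - 1"
  shows "real (n-1 choose (k-1)) * (zY k * zY (n-k)) = fact (n - 1) / 2 ^ (n - 2) * real k"
proof -
  have n2: "n \<ge> 2" using assms by auto
  have b: "fact (k-1) * fact (n - k) * real (n-1 choose (k-1)) = fact (n-1)"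
  proof -
    have k1: "k - 1 \<le> n - 1" using assms by simp
    have "fact (k-1) * fact (n - 1 - (k - 1)) * (n-1 choose (k-1)) = (fact (n-1) :: nat)"
      by (rule binomial_fact_lemma[OF k1])
    moreover have "n - 1 - (k - 1) = n - k" using assms by simp
    ultimately have "real (fact (k-1) * fact (n - k) * (n-1 choose (k-1))) = real (fact (n-1))" by simp
    then show ?thesis by (simp only: of_nat_mult of_nat_fact)
  qed
  have fk: "fact k = real k * fact (k - 1)" using assms by (cases k) (simp_all add: fact_Suc)
  have p: "(2::real) ^ (k - 1) * 2 ^ (n - k - 1) = 2 ^ (n - 2)"
    using assms by (simp add: power_add[symmetric])
  have "real (n-1 choose (k-1)) * (zY k * zY (n-k)) =
     real k * (fact (k-1) * fact (n - k) * real (n-1 choose (k-1))) / (2 ^ (k - 1) * 2 ^ (n - k - 1))"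
    unfolding zY_def fk by (simp add: field_simps)
  also have "\<dots> = fact (n - 1) / 2 ^ (n - 2) * real k" unfolding b p by simp
  finally show ?thesis .
qed

lemma sum_Q:
  fixes X :: "nat \<Rightarrow> real"
  assumes "n \<ge> 2"
  shows "(\<Sum>k=1..n-1. real (n-1 choose (k-1)) * (zY k * zY (n-k) * X k)) = fact (n - 1) / 2 ^ (n - 2) * (\<Sum>k=1..n-1. real k * X k)"
proof -
  have "real (n-1 choose (k-1)) * (zY k * zY (n-k) * X k) = fact (n - 1) / 2 ^ (n - 2) * (real k * X k)"
    if "k \<in> {1..n-1}" for k
  proof -
    have "real (n-1 choose (k-1)) * (zY k * zY (n-k) * X k) = (real (n-1 choose (k-1)) * (zY k * zY (n-k))) * X k"
      by (simp add: algebra_simps)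
    also have "\<dots> = fact (n - 1) / 2 ^ (n - 2) * real k * X k" using Ck_Y[of k n] that by simp
    finally show ?thesis by simp
  qed
  then show ?thesis by (simp add: sum_distrib_left)
qed

lemma sum_k: "(\<Sum>k=1..m. real k) = real m * (real m + 1) / 2"
  by (induction m) (auto simp: field_simps)

lemma rec_e1: "real m * e1Y (m + 1) = 2 * (\<Sum>k=1..m. e1Y k + Tn k)"
  by (induction m) (auto simp: e1Y_def Tn_def field_simps)

lemma e2_step: "real (Suc m) * e2Y (Suc m + 1) = real m * e2Y (m + 1) + 2 * (e2Y (Suc m) + 2 * e1Y (Suc m) + Tn (Suc m))"
proof -
  define H :: real where "H = harm (Suc m)"
  have h0: "harm (Suc (Suc m)) = (harm (Suc m)::real) + inverse (of_nat (Suc (Suc m)))" by (rule harm_Suc)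
  have h: "harm (Suc m + 1) = H + 1 / (real m + 2)"
    using h0 by (simp add: H_def divide_inverse add.commute)
  have h2: "harm (Suc m) = H" by (simp add: H_def)
  have "real (Suc m) * e2Y (Suc m + 1) = (real m + 1) * (real m + 2) * (5 * (real m + 1) - 8 * (H - 1)) - 8 * (real m + 1)"
    unfolding e2Y_def h by (simp add: field_simps)
  moreover have "real m * e2Y (m + 1) + 2 * (e2Y (Suc m) + 2 * e1Y (Suc m) + Tn (Suc m)) =
     (real m + 2) * (real m + 1) * (5 * real m - 8 * (H - 1)) + 4 * (real m + 1) * real m + (real m + 1) * (real m + 2)"
    unfolding e2Y_def e1Y_def Tn_def h2 by (simp add: H_def[symmetric] algebra_simps)
  ultimately show ?thesis by (simp add: algebra_simps)
qed

lemma rec_e2: "real m * e2Y (m + 1) = 2 * (\<Sum>k=1..m. e2Y k + 2 * e1Y k + Tn k)"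
proof (induction m)
  case 0 then show ?case by simp
next
  case (Suc m)
  then show ?case using e2_step[of m] by (simp add: algebra_simps)
qed

lemma zY_Q: "n \<ge> 2 \<Longrightarrow> zY n = fact (n - 1) / 2 ^ (n - 2) * real n / 2"
proof -
  assume n: "n \<ge> 2"
  have f: "fact n = real n * fact (n - 1)" using n by (cases n) (simp_all add: fact_Suc)
  have p: "(2::real) ^ (n - 1) = 2 * 2 ^ (n - 2)" proof -
    have "n - 1 = Suc (n - 2)" using n by simp
    then show ?thesis by simp
  qed
  show ?thesis unfolding zY_def f p by (simp add: field_simps)
qed

lemma Yrec:
  fixes g E :: "nat \<Rightarrow> real"
  assumes n: "n \<ge> 2" and r: "real (n - 1) * E n = 2 * (\<Sum>k=1..n-1. g k)"
  shows "1 / (real n - 1) * (\<Sum>k=1..n-1. real (n-1 choose (k-1)) * (zY k * zY (n-k) * (g k + g (n - k)))) = zY n * E n"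
proof -
  have "(\<Sum>k=1..n-1. real (n-1 choose (k-1)) * (zY k * zY (n-k) * (g k + g (n - k))))
     = fact (n - 1) / 2 ^ (n - 2) * (real n * (\<Sum>k=1..n-1. g k))"
    unfolding sum_Q[OF n] sum_sym by simp
  also have "\<dots> = fact (n - 1) / 2 ^ (n - 2) * real n * (real (n - 1) * E n) / 2"
    unfolding r by simp
  also have "\<dots> = (fact (n - 1) / 2 ^ (n - 2) * real n / 2) * (real (n - 1) * E n)" by simp
  also have "\<dots> = zY n * (real n - 1) * E n" using zY_Q[OF n] n by (simp add: of_nat_diff)
  finally have s: "(\<Sum>k=1..n-1. real (n-1 choose (k-1)) * (zY k * zY (n-k) * (g k + g (n - k)))) = zY n * (real n - 1) * E n" .
  have "real n - 1 \<noteq> 0" using n by simp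
  then show ?thesis unfolding s by simp
qed

lemma yule_sums:
  assumes "finite S" "S \<noteq> {}"
  shows "(\<Sum>t\<in>trees S. yule_prod t * phs 2 t) = zY (card S) * e2Y (card S)"
proof -
  have r1: "real (n - 1) * e1Y n = 2 * (\<Sum>k=1..n-1. e1Y k + Tn k)" if "n \<ge> 2" for n
    using rec_e1[of "n-1"] that by simp
  have r2: "real (n - 1) * e2Y n = 2 * (\<Sum>k=1..n-1. e2Y k + 2 * e1Y k + Tn k)" if "n \<ge> 2" for n
    using rec_e2[of "n-1"] that by simp
  have r0: "real (n - 1) * 1 = 2 * (\<Sum>k=1..n-1. 1/2)" if "n \<ge> 2" for n
    using that by simp
  have hL: "yule_prod (Leaf a) = 1" for a by simp
  have hN: "yule_prod (Node l r) = (\<lambda>n. 1 / (real n - 1)) (card (leaves l) + card (leaves r)) * (yule_prod l * yule_prod r)"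
      if "canonical (Node l r)" for l r
      using that by (simp add: card_Un_disjoint)
  have hz1: "zY 1 = 1" by (simp add: zY_def)
  have h11: "(\<lambda>n. zY n * e1Y n) 1 = 0" by (simp add: e1Y_def)
  have h21: "(\<lambda>n. zY n * e2Y n) 1 = 0" by (simp add: e2Y_def harm_def)
  have hz: "zY n = (\<lambda>n. 1 / (real n - 1)) n * (\<Sum>k=1..n-1. real (n-1 choose (k-1)) * (zY k * zY (n-k)))"
    if n: "n \<ge> 2" for n
  proof -
    have "1 / (real n - 1) * (\<Sum>k=1..n-1. real (n-1 choose (k-1)) * (zY k * zY (n-k) * (1/2 + 1/2))) = zY n * 1"
      by (rule Yrec[where E = "\<lambda>_. 1" and g = "\<lambda>_. 1/2", OF n r0[OF n]])
    then show ?thesis by simp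
  qed
  have hf1: "(\<lambda>n. zY n * e1Y n) n = (\<lambda>n. 1 / (real n - 1)) n * (\<Sum>k=1..n-1. real (n-1 choose (k-1)) *
      ((\<lambda>n. zY n * e1Y n) k * zY (n-k) + zY k * (\<lambda>n. zY n * e1Y n) (n-k) + (Tn k + Tn (n-k)) * (zY k * zY (n-k))))"
    if n: "n \<ge> 2" for n
  proof -
    have "1 / (real n - 1) * (\<Sum>k=1..n-1. real (n-1 choose (k-1)) * (zY k * zY (n-k) * ((e1Y k + Tn k) + (e1Y (n - k) + Tn (n - k))))) = zY n * e1Y n"
      by (rule Yrec[where E = e1Y and g = "\<lambda>k. e1Y k + Tn k", OF n r1[OF n]])
    then show ?thesis by (simp add: algebra_simps)
  qed
  have hf2: "(\<lambda>n. zY n * e2Y n) n = (\<lambda>n. 1 / (real n - 1)) n * (\<Sum>k=1..n-1. real (n-1 choose (k-1)) *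
      (((\<lambda>n. zY n * e2Y n) k + 2 * (\<lambda>n. zY n * e1Y n) k) * zY (n-k) + zY k * ((\<lambda>n. zY n * e2Y n) (n-k) + 2 * (\<lambda>n. zY n * e1Y n) (n-k))
       + (Tn k + Tn (n-k)) * (zY k * zY (n-k))))"
    if n: "n \<ge> 2" for n
  proof -
    have "1 / (real n - 1) * (\<Sum>k=1..n-1. real (n-1 choose (k-1)) * (zY k * zY (n-k) * ((e2Y k + 2 * e1Y k + Tn k) + (e2Y (n - k) + 2 * e1Y (n - k) + Tn (n - k))))) = zY n * e2Y n"
      by (rule Yrec[where E = e2Y and g = "\<lambda>k. e2Y k + 2 * e1Y k + Tn k", OF n r2[OF n]])
    then show ?thesis by (simp add: algebra_simps)
  qed
  show ?thesis using tree_sums[of yule_prod, OF hL hN hz1 h11 h21 hz hf1 hf2 assms] by simp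
qed



definition Sa :: "real \<Rightarrow> real fps" where
  "Sa a = Abs_fps (\<lambda>n. (a gchoose n) * (-2) ^ n)"

lemma Sa_nth: "fps_nth (Sa a) n = (a gchoose n) * (-2) ^ n"
  by (simp add: Sa_def)

lemma Sa_mult: "Sa a * Sa b = Sa (a + b)"
proof (rule fps_ext)
  fix n
  have "fps_nth (Sa a * Sa b) n = (\<Sum>k=0..n. ((a gchoose k) * (b gchoose (n - k))) * (-2) ^ n)"
    by (simp add: fps_mult_nth Sa_nth algebra_simps power_add[symmetric])
  also have "\<dots> = (-2) ^ n * (\<Sum>k=0..n. (a gchoose k) * (b gchoose (n - k)))"
    by (simp add: sum_distrib_left algebra_simps)
  also have "\<dots> = fps_nth (Sa (a + b)) n" by (simp add: gbinomial_Vandermonde Sa_nth)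
  finally show "fps_nth (Sa a * Sa b) n = fps_nth (Sa (a + b)) n" .
qed

lemma Sa0: "Sa 0 = 1"
  by (rule fps_ext) (simp add: Sa_nth gbinomial_0_left)

lemma Sa_step: "real (Suc k) * fps_nth (Sa a) (Suc k) = - 2 * (a - real k) * fps_nth (Sa a) k"
proof -
  have h: "real (Suc k) * (a gchoose Suc k) = (a - real k) * (a gchoose k)"
    using gbinomial_absorption[of k a] gbinomial_absorb_comp[of a k] by simp
  have "real (Suc k) * fps_nth (Sa a) (Suc k) = (-2) ^ Suc k * (real (Suc k) * (a gchoose Suc k))"
    by (simp add: Sa_nth algebra_simps)
  also have "\<dots> = (-2) ^ Suc k * ((a - real k) * (a gchoose k))" by (simp only: h)
  finally show ?thesis by (simp add: Sa_nth algebra_simps)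
qed

lemma Sa_down: "a \<noteq> 0 \<Longrightarrow> fps_nth (Sa (a - 1)) k = (a - real k) / a * fps_nth (Sa a) k"
proof -
  assume a: "a \<noteq> 0"
  have "(a - real k) * (a gchoose k) = a * ((a - 1) gchoose k)" by (rule gbinomial_absorb_comp)
  then have "(a - 1) gchoose k = (a - real k) * (a gchoose k) / a"
    using a by (metis nonzero_mult_div_cancel_left)
  then show ?thesis using a by (simp add: Sa_nth)
qed

definition G2 :: "real fps" where "G2 = Abs_fps (\<lambda>n. 2 ^ n)"

lemma Sa1_G2: "Sa 1 * G2 = 1"
proof (rule fps_ext)
  fix n
  show "fps_nth (Sa 1 * G2) n = fps_nth (1::real fps) n"
  proof (cases n)
    case 0 then show ?thesis by (simp add: fps_mult_nth Sa_nth G2_def)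
  next
    case (Suc m)
    have "fps_nth (Sa 1 * G2) n = (\<Sum>k=0..n. fps_nth (Sa 1) k * fps_nth G2 (n - k))" by (simp add: fps_mult_nth)
    also have "\<dots> = (\<Sum>k\<in>{0, 1}. fps_nth (Sa 1) k * fps_nth G2 (n - k))"
    proof (rule sum.mono_neutral_right)
      show "\<forall>k\<in>{0..n} - {0, 1}. fps_nth (Sa 1) k * fps_nth G2 (n - k) = 0"
      proof
        fix k assume "k \<in> {0..n} - {0, 1}"
        then have "k \<ge> 2" by auto
        then have "(1::real) gchoose k = 0"
          using binomial_gbinomial[of 1 k, where 'a=real] by (simp add: binomial_eq_0)
        then show "fps_nth (Sa 1) k * fps_nth G2 (n - k) = 0" by (simp add: Sa_nth)
      qed
    qed (use Suc in auto)
    also have "\<dots> = 0" using Suc by (simp add: Sa_nth G2_def)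
    finally show ?thesis using Suc by simp
  qed
qed

lemma Sam1: "Sa (-1) = G2"
proof -
  have "Sa (-1) = Sa (-1) * (Sa 1 * G2)" by (simp add: Sa1_G2)
  also have "\<dots> = (Sa (-1) * Sa 1) * G2" by (simp add: mult.assoc)
  also have "\<dots> = G2" by (simp add: Sa_mult Sa0)
  finally show ?thesis .
qed

lemma Sam1_nth: "fps_nth (Sa (-1)) n = 2 ^ n" by (simp add: Sam1 G2_def)

lemma Sam2_nth: "fps_nth (Sa (-2)) n = (real n + 1) * 2 ^ n"
proof -
  have "Sa (-2) = G2 * G2" using Sa_mult[of "-1" "-1"] by (simp add: Sam1)
  then have "fps_nth (Sa (-2)) n = (\<Sum>k=0..n. (2::real) ^ k * 2 ^ (n - k))" by (simp add: fps_mult_nth G2_def)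
  also have "\<dots> = (\<Sum>k=0..n. (2::real) ^ n)" by (intro sum.cong refl) (simp add: power_add[symmetric])
  finally show ?thesis by simp
qed

lemma Sa_pow: "Sa a ^ m = Sa (real m * a)"
  by (induction m) (simp_all add: Sa0 Sa_mult[symmetric] algebra_simps)

definition "ss = Sa (1/2)"
definition "ii = Sa (-1/2)"
definition "ZZ = 1 - ss"
definition "WW = Abs_fps (\<lambda>k. fps_nth ZZ k * Tn k)"
definition "A1 = WW * ZZ * ii"
definition "A2 = (2 * A1 + WW) * ZZ * ii"

lemma si: "ss * ii = 1" unfolding ss_def ii_def by (simp add: Sa_mult Sa0)

lemma ZZ0: "fps_nth ZZ 0 = 0" by (simp add: ZZ_def ss_def Sa_nth)
lemma ZZn: "n \<ge> 1 \<Longrightarrow> fps_nth ZZ n = - fps_nth ss n" by (simp add: ZZ_def)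

lemma i1: "fps_nth (Sa (-1/2)) n = (1 - 2 * real n) * fps_nth (Sa (1/2)) n"
  using Sa_down[of "1/2" n] by (simp add: field_simps)
lemma i3: "fps_nth (Sa (-3/2)) n = (1 + 2 * real n) * (1 - 2 * real n) * fps_nth (Sa (1/2)) n"
proof -
  have "fps_nth (Sa (-3/2)) n = (1 + 2 * real n) * fps_nth (Sa (-1/2)) n"
    using Sa_down[of "-1/2" n] by (simp add: field_simps)
  then show ?thesis using i1[of n] by simp
qed
lemma i5: "fps_nth (Sa (-5/2)) n = (3 + 2 * real n) * (1 + 2 * real n) * (1 - 2 * real n) / 3 * fps_nth (Sa (1/2)) n"
proof -
  have "fps_nth (Sa (-5/2)) n = (3 + 2 * real n) / 3 * fps_nth (Sa (-3/2)) n"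
    using Sa_down[of "-3/2" n] by (simp add: field_simps)
  then show ?thesis using i3[of n] by simp
qed

lemma WW_eq: "8 * WW = ii ^ 3 + 2 * ii - 3 * ss"
proof (rule fps_ext)
  fix n
  have w: "fps_nth WW n = - fps_nth ss n * Tn n"
    by (cases n) (auto simp: WW_def ZZ0 ZZn Tn_def)
  show "fps_nth (8 * WW) n = fps_nth (ii ^ 3 + 2 * ii - 3 * ss) n"
    unfolding ii_def Sa_pow using i3[of n] i1[of n] w
    by (simp add: ss_def Tn_def numeral_fps_const algebra_simps)
qed

lemma A1_rec: "A1 = (A1 + WW) * ZZ"
  using si unfolding A1_def ZZ_def by algebra

lemma A2_rec: "A2 = (A2 + 2 * A1 + WW) * ZZ"
  using si unfolding A2_def A1_def ZZ_def by algebra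

lemma A2_eq: "8 * A2 = 2 * ii ^ 5 - 3 * ii ^ 4 + 5 * ii ^ 3 - 6 * ii ^ 2 - 4 * ii + 9 - 3 * ss"
  using si WW_eq unfolding A2_def A1_def ZZ_def by algebra

lemma Sa1_nth: "k \<ge> 2 \<Longrightarrow> fps_nth (Sa 1) k = 0"
proof -
  assume "k \<ge> 2"
  then have "(1::real) gchoose k = 0"
    using binomial_gbinomial[of 1 k, where 'a=real] by (simp add: binomial_eq_0)
  then show ?thesis by (simp add: Sa_nth)
qed

lemma ZZsq: "n \<ge> 2 \<Longrightarrow> fps_nth (ZZ * ZZ) n = 2 * fps_nth ZZ n"
proof -
  assume n: "n \<ge> 2"
  have "ZZ * ZZ = 1 - 2 * ss + Sa 1"
    unfolding ZZ_def using Sa_mult[of "1/2" "1/2"] by (simp add: ss_def algebra_simps)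
  then show ?thesis using n Sa1_nth[OF n] by (simp add: ZZ_def numeral_fps_const)
qed

lemma conv: fixes U V :: "real fps" assumes u: "fps_nth U 0 = 0" and v: "fps_nth V 0 = 0"
  shows "fps_nth (U * V) n = (\<Sum>k=1..n-1. fps_nth U k * fps_nth V (n - k))"
proof (cases n)
  case 0 then show ?thesis using u by (simp add: fps_mult_nth)
next
  case (Suc m)
  have "fps_nth (U * V) n = (\<Sum>k=0..Suc m. fps_nth U k * fps_nth V (n - k))" by (simp add: fps_mult_nth Suc)
  also have "\<dots> = (\<Sum>k=Suc 0..Suc m. fps_nth U k * fps_nth V (n - k))"
    using u by (simp add: sum.atLeast_Suc_atMost)
  also have "\<dots> = (\<Sum>k=Suc 0..m. fps_nth U k * fps_nth V (n - k))"
    using v by (cases m) (simp_all add: Suc)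
  finally show ?thesis by (simp add: Suc)
qed

lemma Ck_U:
  assumes "1 \<le> k" "k \<le> n - 1"
  shows "real (n-1 choose (k-1)) * (fact k * fact (n-k)) = fact (n - 1) * real k"
proof -
  have b: "fact (k-1) * fact (n - k) * real (n-1 choose (k-1)) = fact (n-1)"
  proof -
    have k1: "k - 1 \<le> n - 1" using assms by simp
    have "fact (k-1) * fact (n - 1 - (k - 1)) * (n-1 choose (k-1)) = (fact (n-1) :: nat)"
      by (rule binomial_fact_lemma[OF k1])
    moreover have "n - 1 - (k - 1) = n - k" using assms by simp
    ultimately have "real (fact (k-1) * fact (n - k) * (n-1 choose (k-1))) = real (fact (n-1))" by simp
    then show ?thesis by (simp only: of_nat_mult of_nat_fact)
  qed
  have fk: "fact k = real k * fact (k - 1)" using assms by (cases k) (simp_all add: fact_Suc)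
  show ?thesis unfolding fk using b by (simp add: algebra_simps)
qed

lemma sum_sym2:
  fixes u v :: "nat \<Rightarrow> real"
  shows "(\<Sum>k=1..n-1. real k * (u k * v (n - k) + v k * u (n - k))) = real n * (\<Sum>k=1..n-1. u k * v (n - k))"
proof -
  have "(\<Sum>k=1..n-1. real k * (v k * u (n - k))) = (\<Sum>k=1..n-1. real (n - 1 + 1 - k) * (v (n - 1 + 1 - k) * u (n - (n - 1 + 1 - k))))"
    by (rule sum.atLeastAtMost_rev)
  also have "\<dots> = (\<Sum>k=1..n-1. real (n - k) * (u k * v (n - k)))"
    by (intro sum.cong refl) auto
  finally have "(\<Sum>k=1..n-1. real k * (u k * v (n - k) + v k * u (n - k))) = (\<Sum>k=1..n-1. (real k + real (n - k)) * (u k * v (n - k)))"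
    by (simp add: algebra_simps sum.distrib)
  also have "\<dots> = (\<Sum>k=1..n-1. real n * (u k * v (n - k)))"
    by (intro sum.cong refl) auto
  finally show ?thesis by (simp add: sum_distrib_left)
qed

lemma Urec:
  assumes n: "n \<ge> 2" and u: "fps_nth U 0 = 0" and v: "fps_nth V 0 = 0"
  shows "(\<Sum>k=1..n-1. real (n-1 choose (k-1)) * (fact k * fact (n-k) *
      (fps_nth U k * fps_nth V (n - k) + fps_nth V k * fps_nth U (n - k)))) = fact n * fps_nth (U * V) n"
proof -
  have "(\<Sum>k=1..n-1. real (n-1 choose (k-1)) * (fact k * fact (n-k) *
      (fps_nth U k * fps_nth V (n - k) + fps_nth V k * fps_nth U (n - k))))
     = (\<Sum>k=1..n-1. fact (n - 1) * (real k * (fps_nth U k * fps_nth V (n - k) + fps_nth V k * fps_nth U (n - k))))"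
  proof (intro sum.cong refl)
    fix k assume "k \<in> {1..n-1}"
    then show "real (n-1 choose (k-1)) * (fact k * fact (n-k) *
      (fps_nth U k * fps_nth V (n - k) + fps_nth V k * fps_nth U (n - k))) =
      fact (n - 1) * (real k * (fps_nth U k * fps_nth V (n - k) + fps_nth V k * fps_nth U (n - k)))"
      using Ck_U[of k n] by (simp add: mult.assoc[symmetric])
  qed
  also have "\<dots> = fact (n - 1) * (\<Sum>k=1..n-1. real k * (fps_nth U k * fps_nth V (n - k) + fps_nth V k * fps_nth U (n - k)))"
    by (simp only: sum_distrib_left)
  also have "\<dots> = fact (n - 1) * (real n * (\<Sum>k=1..n-1. fps_nth U k * fps_nth V (n - k)))"
    by (simp only: sum_sym2)
  also have "\<dots> = fact (n - 1) * (real n * fps_nth (U * V) n)"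
    by (simp only: conv[OF u v])
  also have "\<dots> = fact n * fps_nth (U * V) n"
  proof -
    have "fact n = real n * fact (n - 1)" using n by (cases n) (simp_all add: fact_Suc)
    then show ?thesis by simp
  qed
  finally show ?thesis .
qed


lemma unif_sums:
  assumes "finite S" "S \<noteq> {}"
  shows "(\<Sum>t\<in>trees S. phs 2 t) = fact (card S) * fps_nth A2 (card S)"
proof -
  have WW0: "fps_nth WW 0 = 0" by (simp add: WW_def ZZ0)
  have A10: "fps_nth A1 0 = 0" by (simp add: A1_def WW0)
  have A20: "fps_nth A2 0 = 0" by (simp add: A2_def A10 WW0)
  have hL: "(\<lambda>_. 1::real) (Leaf a) = 1" for a by simp
  have hN: "(\<lambda>_. 1::real) (Node l r) = (\<lambda>_. 1) (card (leaves l) + card (leaves r)) * ((\<lambda>_. 1) l * (\<lambda>_. 1) r)"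
    for l r by simp
  have hz1: "(\<lambda>n. fact n * fps_nth ZZ n) 1 = 1" by (simp add: ZZ_def ss_def Sa_nth)
  have h11: "(\<lambda>n. fact n * fps_nth A1 n) 1 = 0"
    using conv[of "A1 + WW" ZZ 1] A10 WW0 ZZ0 by (simp flip: A1_rec)
  have h21: "(\<lambda>n. fact n * fps_nth A2 n) 1 = 0"
    using conv[of "A2 + 2 * A1 + WW" ZZ 1] A10 A20 WW0 ZZ0 by (simp flip: A2_rec)
  have hz: "(\<lambda>n. fact n * fps_nth ZZ n) n = (\<lambda>_. 1) n * (\<Sum>k=1..n-1. real (n-1 choose (k-1)) *
      ((\<lambda>n. fact n * fps_nth ZZ n) k * (\<lambda>n. fact n * fps_nth ZZ n) (n-k)))" if n: "n \<ge> 2" for n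
  proof -
    have "(\<Sum>k=1..n-1. real (n-1 choose (k-1)) * (fact k * fact (n-k) *
      (fps_nth ZZ k * fps_nth ZZ (n - k) + fps_nth ZZ k * fps_nth ZZ (n - k)))) = fact n * fps_nth (ZZ * ZZ) n"
      by (rule Urec[OF n ZZ0 ZZ0])
    then have "2 * (\<Sum>k=1..n-1. real (n-1 choose (k-1)) * (fact k * fps_nth ZZ k * (fact (n-k) * fps_nth ZZ (n - k))))
        = 2 * (fact n * fps_nth ZZ n)"
      by (simp add: ZZsq[OF n] sum_distrib_left algebra_simps)
    then show ?thesis by simp
  qed
  have hf1: "(\<lambda>n. fact n * fps_nth A1 n) n = (\<lambda>_. 1) n * (\<Sum>k=1..n-1. real (n-1 choose (k-1)) *
      ((\<lambda>n. fact n * fps_nth A1 n) k * (\<lambda>n. fact n * fps_nth ZZ n) (n-k) + (\<lambda>n. fact n * fps_nth ZZ n) k * (\<lambda>n. fact n * fps_nth A1 n) (n-k)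
        + (Tn k + Tn (n-k)) * ((\<lambda>n. fact n * fps_nth ZZ n) k * (\<lambda>n. fact n * fps_nth ZZ n) (n-k))))" if n: "n \<ge> 2" for n
  proof -
    have "(\<Sum>k=1..n-1. real (n-1 choose (k-1)) * (fact k * fact (n-k) *
      (fps_nth (A1 + WW) k * fps_nth ZZ (n - k) + fps_nth ZZ k * fps_nth (A1 + WW) (n - k)))) = fact n * fps_nth ((A1 + WW) * ZZ) n"
      by (rule Urec[OF n _ ZZ0]) (simp add: A10 WW0)
    then show ?thesis unfolding A1_rec[symmetric]
      by (simp add: WW_def algebra_simps)
  qed
  have hf2: "(\<lambda>n. fact n * fps_nth A2 n) n = (\<lambda>_. 1) n * (\<Sum>k=1..n-1. real (n-1 choose (k-1)) *
      (((\<lambda>n. fact n * fps_nth A2 n) k + 2 * (\<lambda>n. fact n * fps_nth A1 n) k) * (\<lambda>n. fact n * fps_nth ZZ n) (n-k)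
        + (\<lambda>n. fact n * fps_nth ZZ n) k * ((\<lambda>n. fact n * fps_nth A2 n) (n-k) + 2 * (\<lambda>n. fact n * fps_nth A1 n) (n-k))
        + (Tn k + Tn (n-k)) * ((\<lambda>n. fact n * fps_nth ZZ n) k * (\<lambda>n. fact n * fps_nth ZZ n) (n-k))))" if n: "n \<ge> 2" for n
  proof -
    have "(\<Sum>k=1..n-1. real (n-1 choose (k-1)) * (fact k * fact (n-k) *
      (fps_nth (A2 + 2 * A1 + WW) k * fps_nth ZZ (n - k) + fps_nth ZZ k * fps_nth (A2 + 2 * A1 + WW) (n - k)))) = fact n * fps_nth ((A2 + 2 * A1 + WW) * ZZ) n"
      by (rule Urec[OF n _ ZZ0]) (simp add: A10 A20 WW0 numeral_fps_const)
    then show ?thesis unfolding A2_rec[symmetric]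
      by (simp add: WW_def numeral_fps_const algebra_simps)
  qed
  show ?thesis using tree_sums[of "\<lambda>_. 1", OF hL hN hz1 h11 h21 hz hf1 hf2 assms] by simp
qed



lemma dfact_even: "dfact (2 * m) = 2 ^ m * fact m"
  by (induction m) (auto simp: algebra_simps)

lemma dfact_pos: "dfact m > 0"
  by (induction m rule: dfact.induct) auto

lemma dfact_odd: "k \<ge> 1 \<Longrightarrow> dfact (2 * k - 1) = (2 * k - 1) * dfact (2 * k - 3)"
proof -
  assume k: "k \<ge> 1"
  show ?thesis
  proof (cases "k = 1")
    case True then show ?thesis by simp
  next
    case False
    then have "2 * k - 1 = Suc (Suc (2 * k - 3))" using k by simp
    then show ?thesis by (metis dfact.simps(3))
  qed
qed

lemma ss_nth: "n \<ge> 1 \<Longrightarrow> fact n * fps_nth ss n = - real (dfact (2 * n - 3))"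
proof (induction n rule: nat_induct_at_least)
  case base then show ?case by (simp add: ss_def Sa_nth)
next
  case (Suc n)
  have "fact (Suc n) * fps_nth ss (Suc n) = fact n * (real (Suc n) * fps_nth ss (Suc n))"
    by (simp add: algebra_simps)
  also have "\<dots> = (2 * real n - 1) * (fact n * fps_nth ss n)"
    unfolding ss_def Sa_step by (simp add: algebra_simps)
  also have "\<dots> = - ((2 * real n - 1) * real (dfact (2 * n - 3)))" using Suc.IH by simp
  also have "(2 * real n - 1) * real (dfact (2 * n - 3)) = real (dfact (2 * Suc n - 3))"
    using dfact_odd[OF Suc.hyps] Suc.hyps by (simp add: of_nat_diff)
  finally show ?case .
qed

lemma A2_closed:
  assumes n: "n \<ge> 1"
  shows "fact n * fps_nth A2 n = real (dfact (2 * n - 3)) * (real n * (4 * real n ^ 2 + 21 * real n - 7) / 6)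
      - 3 / 8 * (real n + 3) * 2 ^ n * fact n"
proof -
  define b where "b = fps_nth (Sa (1/2)) n"
  have "8 * fps_nth A2 n = fps_nth (2 * ii ^ 5 - 3 * ii ^ 4 + 5 * ii ^ 3 - 6 * ii ^ 2 - 4 * ii + 9 - 3 * ss) n"
    using arg_cong[OF A2_eq, of "\<lambda>F. fps_nth F n"] by (simp add: numeral_fps_const)
  also have "\<dots> = 2 * fps_nth (Sa (-5/2)) n - 3 * fps_nth (Sa (-2)) n + 5 * fps_nth (Sa (-3/2)) n
      - 6 * fps_nth (Sa (-1)) n - 4 * fps_nth (Sa (-1/2)) n - 3 * b"
    using n unfolding ii_def Sa_pow b_def ss_def by (simp add: numeral_fps_const)
  also have "\<dots> = b * (2 * ((3 + 2 * real n) * (1 + 2 * real n) * (1 - 2 * real n) / 3)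
       + 5 * ((1 + 2 * real n) * (1 - 2 * real n)) - 4 * (1 - 2 * real n) - 3)
       - 3 * (real n + 1) * 2 ^ n - 6 * 2 ^ n"
    unfolding i5 i3 i1 Sam2_nth Sam1_nth b_def by (simp add: algebra_simps)
  finally have e: "8 * fps_nth A2 n = b * (2 * ((3 + 2 * real n) * (1 + 2 * real n) * (1 - 2 * real n) / 3)
       + 5 * ((1 + 2 * real n) * (1 - 2 * real n)) - 4 * (1 - 2 * real n) - 3)
       - 3 * (real n + 1) * 2 ^ n - 6 * 2 ^ n" .
  have fb: "fact n * b = - real (dfact (2 * n - 3))" using ss_nth[OF n] by (simp add: b_def ss_def)
  have "8 * (fact n * fps_nth A2 n) = (fact n * b) * (2 * ((3 + 2 * real n) * (1 + 2 * real n) * (1 - 2 * real n) / 3)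
       + 5 * ((1 + 2 * real n) * (1 - 2 * real n)) - 4 * (1 - 2 * real n) - 3)
       - fact n * (3 * (real n + 1) * 2 ^ n + 6 * 2 ^ n)"
    using arg_cong[OF e, of "\<lambda>x. fact n * x"] by (simp add: algebra_simps)
  then have "8 * (fact n * fps_nth A2 n) = - real (dfact (2 * n - 3)) * (2 * ((3 + 2 * real n) * (1 + 2 * real n) * (1 - 2 * real n) / 3)
       + 5 * ((1 + 2 * real n) * (1 - 2 * real n)) - 4 * (1 - 2 * real n) - 3)
       - fact n * (3 * (real n + 1) * 2 ^ n + 6 * 2 ^ n)" unfolding fb .
  then show ?thesis by (simp add: field_simps power2_eq_square)
qed

lemma Phi2_phs: "leaves t = {1..n} \<Longrightarrow> real (Phi2 n t) = phs 2 t"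
proof -
  assume l: "leaves t = {1..n}"
  have e: "{(i,j). 1 \<le> i \<and> i \<le> j \<and> j \<le> n} = pairs (leaves t)" unfolding l pairs_def by auto
  have "real (Phi2 n t) = (\<Sum>x\<in>{(i,j). 1 \<le> i \<and> i \<le> j \<and> j \<le> n}. real (lca_depth t (fst x) (snd x)) ^ 2)"
    unfolding Phi2_def by (simp add: of_nat_sum case_prod_beta)
  also have "\<dots> = phs 2 t" unfolding e phs_def by (simp add: case_prod_beta)
  finally show ?thesis .
qed


theorem proposition5:
  fixes n :: nat
  assumes "n \<ge> 2"
  shows "E_Y_Phi2 n = 5 * real n * (real n - 1) - 8 * real n * (harm n - 1) \<and>
         E_U_Phi2 n = real n * (4 * real n ^ 2 + 21 * real n - 7) / 6
           - 3 / 4 * real n * (real n + 3) * real (dfact (2*n-2)) / real (dfact (2*n-3))"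
proof
  have fin: "finite {1..n}" "{1..n} \<noteq> {}" "card {1..n} = n" using assms by auto
  have pt: "phylo_trees n = trees {1..n}" by (simp add: phylo_trees_def trees_def)
  have ph: "t \<in> trees {1..n} \<Longrightarrow> real (Phi2 n t) = phs 2 t" for t
    by (rule Phi2_phs) (simp add: trees_def)
  have "E_Y_Phi2 n = 2 ^ (n - 1) / fact n * (\<Sum>t\<in>trees {1..n}. yule_prod t * phs 2 t)"
    unfolding E_Y_Phi2_def P_Y_def pt sum_distrib_left
    by (intro sum.cong refl) (simp add: ph)
  also have "\<dots> = 2 ^ (n - 1) / fact n * (zY n * e2Y n)" using yule_sums[OF fin(1,2)] fin(3) by simp
  also have "\<dots> = e2Y n" by (simp add: zY_def)
  finally show "E_Y_Phi2 n = 5 * real n * (real n - 1) - 8 * real n * (harm n - 1)"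
    by (simp add: e2Y_def algebra_simps)
next
  have fin: "finite {1..n}" "{1..n} \<noteq> {}" "card {1..n} = n" using assms by auto
  have pt: "phylo_trees n = trees {1..n}" by (simp add: phylo_trees_def trees_def)
  have ph: "t \<in> trees {1..n} \<Longrightarrow> real (Phi2 n t) = phs 2 t" for t
    by (rule Phi2_phs) (simp add: trees_def)
  define D where "D = real (dfact (2 * n - 3))"
  have D0: "D > 0" unfolding D_def using dfact_pos[of "2 * n - 3"] by simp
  have "E_U_Phi2 n = 1 / D * (\<Sum>t\<in>trees {1..n}. phs 2 t)"
    unfolding E_U_Phi2_def P_U_def pt sum_distrib_left D_def
    by (intro sum.cong refl) (simp add: ph)
  also have "\<dots> = 1 / D * (D * (real n * (4 * real n ^ 2 + 21 * real n - 7) / 6)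
      - 3 / 8 * (real n + 3) * 2 ^ n * fact n)"
    using unif_sums[OF fin(1,2)] fin(3) A2_closed[of n] assms by (simp add: D_def)
  also have "\<dots> = real n * (4 * real n ^ 2 + 21 * real n - 7) / 6 - 3 / 8 * (real n + 3) * 2 ^ n * fact n / D"
    using D0 by (simp add: field_simps)
  also have "3 / 8 * (real n + 3) * 2 ^ n * fact n = 3 / 4 * real n * (real n + 3) * real (dfact (2*n-2))"
  proof -
    have "2 * n - 2 = 2 * (n - 1)" by simp
    then have "real (dfact (2*n-2)) = 2 ^ (n - 1) * fact (n - 1)" by (simp add: dfact_even)
    moreover have "fact n = real n * fact (n - 1)" using assms
      by (cases n) (simp_all add: fact_Suc)
    moreover have "(2::real) ^ n = 2 * 2 ^ (n - 1)" using assms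
      by (cases n) simp_all
    ultimately show ?thesis by simp
  qed
  finally show "E_U_Phi2 n = real n * (4 * real n ^ 2 + 21 * real n - 7) / 6
           - 3 / 4 * real n * (real n + 3) * real (dfact (2*n-2)) / real (dfact (2*n-3))"
    by (simp add: D_def)
qed


end
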